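(* Let $K$ be a field with a non-archimedean absolute value $v$, let $\mathbb{C}_v$ be the completion of an algebraic closure of $K$, and let $\phi(z)\in K[z]$ be a polynomial of degree $d\geq 2$ with lead coefficient $a_d$. Let $\mathfrak{K}_v\subseteq\mathbb{C}_v$ be the filled Julia set of $\phi$ at $v$, let $r_v=\sup\{|x-y|_v : x,y\in\mathfrak{K}_v\}$ be its diameter, and let $U_0\subseteq\mathbb{C}_v$ be the intersection of all disks containing $\mathfrak{K}_v$. Then: (1) $U_0=\bar{D}(x,r_v)$ for any $x\in\mathfrak{K}_v$; (2) there exists $x\in\mathbb{C}_v$ such that $|x|_v=r_v$; (3) $r_v\geq|a_d|_v^{-1/(d-1)}$, with equality if and only if $\mathfrak{K}_v=U_0$; (4) if $r_v>|a_d|_v^{-1/(d-1)}$, let $\alpha\in U_0$ and let $\beta_1,\ldots,\beta_d\in\mathbb{C}_v$ be the roots of $\phi(z)=\alpha$; then $\mathfrak{K}_v\subseteq U_1$, where $U_1=\bigcup_{i=1}^d\bar{D}(\beta_i,|a_d|_v^{-1/(d-1)})$.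
   Context: The filled Julia set of $\phi$ at $v$ is $\mathfrak{K}_v=\{x\in\mathbb{C}_v : \{|\phi^n(x)|_v:n\geq 0\}\text{ is bounded}\}$, where $\phi^n$ is the $n$-th iterate of $\phi$. For $x\in\mathbb{C}_v$ and $r>0$, $\bar{D}(x,r)=\{y\in\mathbb{C}_v:|y-x|_v\leq r\}$ is the closed disk. *)

theory Defs
  imports Complex_Main "HOL-Computational_Algebra.Polynomial"
begin

definition nonarch_abs :: "('a::field \<Rightarrow> real) \<Rightarrow> bool" where
  "nonarch_abs av \<longleftrightarrow>
     (\<forall>x. av x \<ge> 0) \<and> (\<forall>x. av x = 0 \<longleftrightarrow> x = 0) \<and>
     (\<forall>x y. av (x * y) = av x * av y) \<and>
     (\<forall>x y. av (x + y) \<le> max (av x) (av y))"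

definition alg_closed_field :: "'a::field itself \<Rightarrow> bool" where
  "alg_closed_field _ \<longleftrightarrow> (\<forall>p::'a poly. degree p \<ge> 1 \<longrightarrow> (\<exists>x. poly p x = 0))"

definition av_complete :: "('a::field \<Rightarrow> real) \<Rightarrow> bool" where
  "av_complete av \<longleftrightarrow>
     (\<forall>X::nat \<Rightarrow> 'a. (\<forall>e>0. \<exists>N. \<forall>m\<ge>N. \<forall>n\<ge>N. av (X m - X n) < e) \<longrightarrow>
        (\<exists>L. \<forall>e>0. \<exists>N. \<forall>n\<ge>N. av (X n - L) < e))"

definition is_subfield :: "'a::field set \<Rightarrow> bool" where
  "is_subfield K \<longleftrightarrow> 0 \<in> K \<and> 1 \<in> K \<and>
     (\<forall>x\<in>K. \<forall>y\<in>K. x + y \<in> K \<and> x * y \<in> K) \<and>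
     (\<forall>x\<in>K. - x \<in> K \<and> inverse x \<in> K)"

definition algebraic_over :: "'a::field set \<Rightarrow> 'a set" where
  "algebraic_over K = {x. \<exists>p. p \<noteq> 0 \<and> (\<forall>i. coeff p i \<in> K) \<and> poly p x = 0}"

text \<open>The ambient field (with absolute value av) is C_v: complete, algebraically closed,
  and containing the algebraic closure of K as a dense subset, i.e. the completion of
  an algebraic closure of K; av restricted to K is v.\<close>
definition is_Cv :: "'a::field set \<Rightarrow> ('a \<Rightarrow> real) \<Rightarrow> bool" where
  "is_Cv K av \<longleftrightarrow> is_subfield K \<and> nonarch_abs av \<and> alg_closed_field TYPE('a) \<and>
     av_complete av \<and>
     (\<forall>y. \<forall>e>0. \<exists>x\<in>algebraic_over K. av (y - x) < e)"

definition cdisk :: "('a::field \<Rightarrow> real) \<Rightarrow> 'a \<Rightarrow> real \<Rightarrow> 'a set" where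
  "cdisk av x r = {y. av (y - x) \<le> r}"

definition filled_julia :: "('a::field \<Rightarrow> real) \<Rightarrow> 'a poly \<Rightarrow> 'a set" where
  "filled_julia av \<phi> = {x. bdd_above (range (\<lambda>n. av ((poly \<phi> ^^ n) x)))}"

definition julia_diam :: "('a::field \<Rightarrow> real) \<Rightarrow> 'a poly \<Rightarrow> real" where
  "julia_diam av \<phi> = Sup {av (x - y) | x y. x \<in> filled_julia av \<phi> \<and> y \<in> filled_julia av \<phi>}"

definition U0 :: "('a::field \<Rightarrow> real) \<Rightarrow> 'a poly \<Rightarrow> 'a set" where
  "U0 av \<phi> = \<Inter> {cdisk av c r | c r. r > 0 \<and> filled_julia av \<phi> \<subseteq> cdisk av c r}"

end

theory Submission
  imports Defs
begin


locale NA =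
  fixes av :: "'a::field \<Rightarrow> real"
  assumes na: "nonarch_abs av"
begin

lemma nonneg[simp]: "av x \<ge> 0" using na unfolding nonarch_abs_def by blast
lemma zero_iff[simp]: "av x = 0 \<longleftrightarrow> x = 0" using na unfolding nonarch_abs_def by blast
lemma mult: "av (x * y) = av x * av y" using na unfolding nonarch_abs_def by blast
lemma add_le: "av (x + y) \<le> max (av x) (av y)" using na unfolding nonarch_abs_def by blast
lemma zero[simp]: "av 0 = 0" by simp
lemma pos: "x \<noteq> 0 \<Longrightarrow> av x > 0" using nonneg[of x] zero_iff[of x] by linarith

lemma one[simp]: "av 1 = 1"
proof -
  have "av 1 = av 1 * av 1" using mult[of 1 1] by simp
  moreover have "av 1 \<noteq> 0" by simp
  ultimately show ?thesis by simp
qed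

lemma minus_one: "av (-1) = 1"
proof -
  have "av (-1) * av (-1) = 1" using mult[of "-1" "-1"] by simp
  then have "av (-1) ^ 2 = 1 ^ 2" by (simp add: power2_eq_square)
  then show ?thesis using power_eq_iff_eq_base[of 2 "av (-1)" 1] by simp
qed

lemma minus[simp]: "av (- x) = av x"
  using mult[of "-1" x] minus_one by simp

lemma commute: "av (x - y) = av (y - x)"
  using minus[of "x - y"] by simp

lemma diff_le: "av (x - y) \<le> max (av x) (av y)"
  using add_le[of x "-y"] by simp

lemma tri: "av (x - z) \<le> max (av (x - y)) (av (y - z))"
  using add_le[of "x - y" "y - z"] by simp

lemma power: "av (x ^ n) = av x ^ n"
  by (induction n) (simp_all add: mult)

lemma prod: "av (\<Prod>i\<in>A. g i) = (\<Prod>i\<in>A. av (g i))"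
  by (induction A rule: infinite_finite_induct) (simp_all add: mult)

lemma inverse: "av (inverse x) = inverse (av x)"
proof (cases "x = 0")
  case False
  then have h: "av x * av (inverse x) = 1" using mult[of x "inverse x"] by simp
  have "av x \<noteq> 0" using False by simp
  then show ?thesis using h by (metis inverse_unique)
qed simp

lemma strict: "av y < av x \<Longrightarrow> av (x + y) = av x"
proof -
  assume h: "av y < av x"
  have "av (x + y) \<le> av x" using add_le[of x y] h by simp
  moreover have "av x \<le> max (av (x + y)) (av y)" using add_le[of "x + y" "-y"] by simp
  ultimately show ?thesis using h by linarith
qed

lemma strict_diff: "av (y - c) < av (x - c) \<Longrightarrow> av (x - y) = av (x - c)"
  using strict[of "c - y" "x - c"] commute[of c y] by simp

lemma le_add_bound: "av x \<le> av (x - y) + av y"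
proof -
  have "av x \<le> max (av (x - y)) (av y)" using add_le[of "x - y" y] by simp
  then show ?thesis using nonneg[of y] nonneg[of "x-y"] by linarith
qed

end




lemma split_poly:
  fixes p :: "'a::field poly"
  assumes ac: "alg_closed_field TYPE('a)"
  shows "\<exists>\<beta>. p = smult (lead_coeff p) (\<Prod>i<degree p. [:-\<beta> i, 1:])"
proof (induction "degree p" arbitrary: p)
  case 0
  then obtain c where "p = [:c:]" by (metis degree_eq_zeroE)
  then show ?case using 0 by simp
next
  case (Suc n)
  then obtain x where "poly p x = 0" using ac unfolding alg_closed_field_def by fastforce
  then obtain q where pq: "p = [:-x, 1:] * q" by (meson dvdE poly_eq_0_iff_dvd)
  then have q0: "q \<noteq> 0" using Suc by (metis mult_zero_right degree_0 nat.distinct(1))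
  have "degree p = degree [:-x, 1:] + degree q" unfolding pq
    by (rule degree_mult_eq) (use q0 in auto)
  then have dq: "degree q = n" using Suc(2) by simp
  have lq: "lead_coeff q = lead_coeff p" unfolding pq lead_coeff_mult by simp
  obtain \<beta> where b: "q = smult (lead_coeff q) (\<Prod>i<degree q. [:-\<beta> i, 1:])"
    using Suc(1)[of q] dq by auto
  define \<beta>' where "\<beta>' = \<beta>(n := x)"
  have "(\<Prod>i<Suc n. [:-\<beta>' i, 1:]) = (\<Prod>i<n. [:-\<beta> i, 1:]) * [:-x, 1:]"
    by (simp add: \<beta>'_def)
  moreover have "p = [:-x, 1:] * smult (lead_coeff p) (\<Prod>i<n. [:-\<beta> i, 1:])"
    using pq b dq lq by metis
  ultimately have "p = smult (lead_coeff p) (\<Prod>i<Suc n. [:-\<beta>' i, 1:])"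
    by (metis mult.commute mult_smult_right)
  then show ?case using Suc(2) by metis
qed

lemma split_poly_eval:
  fixes p :: "'a::field poly"
  assumes "p = smult c (\<Prod>i<n. [:-\<beta> i, 1:])"
  shows "poly p z = c * (\<Prod>i<n. z - \<beta> i)"
  using assms by (simp add: poly_prod)

lemma exists_prod_root:
  fixes \<gamma> :: "nat \<Rightarrow> 'a::field"
  assumes ac: "alg_closed_field TYPE('a)" and n: "n \<ge> 1"
  shows "\<exists>z. (\<Prod>i<n. z - \<gamma> i) = e"
proof -
  let ?P = "(\<Prod>i<n. [:-\<gamma> i, 1:]) - [:e:]"
  have dP: "degree (\<Prod>i<n. [:-\<gamma> i, 1:]) = n"
    by (subst degree_prod_eq_sum_degree) auto
  have eq: "?P = (\<Prod>i<n. [:-\<gamma> i, 1:]) + [:-e:]" by simp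
  have "degree [:-e:] < n" using n by simp
  then have "degree ?P = n" unfolding eq using dP by (simp add: degree_add_eq_left)
  then have "\<exists>z. poly ?P z = 0" using ac n unfolding alg_closed_field_def by metis
  then obtain z where "poly ?P z = 0" by blast
  then have "poly (\<Prod>i<n. [:-\<gamma> i, 1:]) z = e" by simp
  then show ?thesis by (auto simp: poly_prod)
qed




locale Dyn = NA av for av :: "'a::field \<Rightarrow> real" +
  fixes \<phi> :: "'a poly" and d :: nat
  assumes ac: "alg_closed_field TYPE('a)" and deg: "degree \<phi> = d" and d2: "d \<ge> 2"
begin

abbreviation f where "f \<equiv> poly \<phi>"
definition a where "a = lead_coeff \<phi>"
definition \<rho> where "\<rho> = av a powr (-1 / (real d - 1))"
abbreviation J where "J \<equiv> filled_julia av \<phi>"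
abbreviation r where "r \<equiv> julia_diam av \<phi>"

lemma a_nz: "a \<noteq> 0"
  using deg d2 unfolding a_def by auto

lemma ava: "av a > 0" using pos[OF a_nz] .

lemma \<rho>_pos: "\<rho> > 0" unfolding \<rho>_def using ava a_nz by simp

lemma a\<rho>: "av a * \<rho> ^ (d - 1) = 1"
proof -
  have "\<rho> ^ (d - 1) = \<rho> powr real (d - 1)" using powr_realpow[OF \<rho>_pos] by simp
  also have "\<dots> = av a powr (-1 / (real d - 1) * real (d - 1))" unfolding \<rho>_def powr_powr ..
  also have "-1 / (real d - 1) * real (d - 1) = -1" using d2 by (simp add: of_nat_diff)
  finally show ?thesis using ava a_nz powr_neg_one[OF ava] by simp
qed

lemma gt1: "t > \<rho> \<Longrightarrow> av a * t ^ (d - 1) > 1"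
proof -
  assume "t > \<rho>"
  then have "\<rho> ^ (d - 1) < t ^ (d - 1)" using \<rho>_pos d2 by (intro power_strict_mono) auto
  then show ?thesis using a\<rho> ava by (metis mult_strict_left_mono)
qed

lemma ge1: "t \<ge> \<rho> \<Longrightarrow> av a * t ^ (d - 1) \<ge> 1"
proof -
  assume "t \<ge> \<rho>"
  then have "\<rho> ^ (d - 1) \<le> t ^ (d - 1)" using \<rho>_pos d2 by (intro power_mono) auto
  then show ?thesis using a\<rho> ava by (metis mult_left_mono less_imp_le)
qed

lemma split_d: "av a * t ^ d = t * (av a * t ^ (d - 1))"
proof -
  have "d = Suc (d - 1)" using d2 by simp
  then have "t ^ d = t * t ^ (d - 1)" by (metis power_Suc)
  then show ?thesis by simp
qed

lemma shift_split: "\<exists>\<gamma>. \<forall>z. f z - w = a * (\<Prod>i<d. z - \<gamma> i)"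
proof -
  let ?p = "\<phi> - [:w:]"
  have e: "?p = \<phi> + [:-w:]" by simp
  have dp: "degree ?p = d" unfolding e using deg d2 by (subst degree_add_eq_left) auto
  have "coeff [:w:] d = 0" using d2 by (cases d) auto
  then have lp: "lead_coeff ?p = a" using dp unfolding a_def deg by simp
  have lp2: "coeff ?p d = a" using lp dp by simp
  obtain \<gamma> where h: "?p = smult (lead_coeff ?p) (\<Prod>i<degree ?p. [:-\<gamma> i, 1:])"
    using split_poly[OF ac] by blast
  have "?p = smult a (\<Prod>i<d. [:-\<gamma> i, 1:])" using h unfolding dp lp2 .
  then have "\<forall>z. poly ?p z = a * (\<Prod>i<d. z - \<gamma> i)"
    by (metis split_poly_eval)
  then show ?thesis by auto
qed

lemma far:
  assumes "\<forall>i<d. av (\<gamma> i - c) < av (z - c)"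
  shows "av (\<Prod>i<d. z - \<gamma> i) = av (z - c) ^ d"
proof -
  have "av (\<Prod>i<d. z - \<gamma> i) = (\<Prod>i<d. av (z - \<gamma> i))" by (rule prod)
  also have "\<dots> = (\<Prod>i<d. av (z - c))"
    using assms by (intro prod.cong) (auto intro: strict_diff)
  finally show ?thesis by simp
qed

lemma iter: "(f ^^ n) (f x) = (f ^^ Suc n) x"
  by (metis comp_apply funpow_Suc_right)

lemma J_iff: "x \<in> J \<longleftrightarrow> f x \<in> J"
proof -
  let ?g = "\<lambda>n. av ((f ^^ n) x)"
  have e1: "range (\<lambda>n. av ((f ^^ n) (f x))) = range (\<lambda>n. ?g (Suc n))" by (simp add: iter)
  have s1: "range (\<lambda>n. ?g (Suc n)) \<subseteq> range ?g" by (intro image_subsetI) (rule rangeI)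
  have s2: "range ?g \<subseteq> insert (?g 0) (range (\<lambda>n. ?g (Suc n)))"
  proof
    fix y assume "y \<in> range ?g"
    then obtain n where "y = ?g n" by auto
    then show "y \<in> insert (?g 0) (range (\<lambda>n. ?g (Suc n)))" by (cases n) auto
  qed
  have "bdd_above (range ?g) \<longleftrightarrow> bdd_above (range (\<lambda>n. ?g (Suc n)))"
    using s1 s2 bdd_above_mono bdd_above_insert by metis
  then show ?thesis unfolding filled_julia_def using e1 by simp
qed

lemma J_iter: "x \<in> J \<Longrightarrow> (f ^^ n) x \<in> J"
  by (induction n) (auto simp: J_iff[symmetric])

lemma J_of_bounded:
  assumes "\<forall>n. av ((f ^^ n) x - c) \<le> B"
  shows "x \<in> J"
proof -
  have "\<forall>n. av ((f ^^ n) x) \<le> B + av c"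
  proof
    fix n have "av ((f ^^ n) x) \<le> av ((f ^^ n) x - c) + av c" by (rule le_add_bound)
    then show "av ((f ^^ n) x) \<le> B + av c" using assms by (meson add_right_mono order_trans)
  qed
  then show ?thesis unfolding filled_julia_def bdd_above_def by auto
qed

lemma J_ne: "\<exists>x0. x0 \<in> J"
proof -
  let ?p = "\<phi> - [:0, 1:]"
  have e: "?p = \<phi> + - [:0, 1:]" by simp
  have "degree ?p = d" unfolding e using deg d2 by (subst degree_add_eq_left) auto
  moreover have h: "\<forall>p::'a poly. degree p \<ge> 1 \<longrightarrow> (\<exists>x. poly p x = 0)"
    using ac unfolding alg_closed_field_def by blast
  ultimately have "\<exists>z. poly ?p z = 0" using d2 by (intro h[rule_format]) simp
  then obtain z where "poly ?p z = 0" by blast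
  then have fz: "f z = z" by simp
  have "(f ^^ n) z = z" for n by (induction n) (simp_all add: fz)
  then have "z \<in> J" using J_of_bounded[of z 0 "av z"] by simp
  then show ?thesis by blast
qed

end



context Dyn begin

lemma J_bdd:
  assumes x0: "x0 \<in> J"
  shows "\<exists>T>0. \<forall>z\<in>J. av (z - x0) < T"
proof -
  obtain \<gamma> where h\<gamma>: "\<forall>z. f z - x0 = a * (\<Prod>i<d. z - \<gamma> i)" using shift_split by blast
  define M where "M = Max (insert \<rho> ((\<lambda>i. av (\<gamma> i - x0)) ` {..<d}))"
  define T1 where "T1 = M + 1"
  have fin: "finite (insert \<rho> ((\<lambda>i. av (\<gamma> i - x0)) ` {..<d}))" by simp
  have \<gamma>T: "\<forall>i<d. av (\<gamma> i - x0) < T1"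
  proof (intro allI impI)
    fix i assume "i < d"
    then have "av (\<gamma> i - x0) \<le> M" unfolding M_def using fin by (intro Max_ge) auto
    then show "av (\<gamma> i - x0) < T1" unfolding T1_def by simp
  qed
  have "\<rho> \<le> M" unfolding M_def using fin by (intro Max_ge) auto
  then have \<rho>T: "\<rho> < T1" unfolding T1_def by simp
  then have T1pos: "T1 > 0" using \<rho>_pos by simp
  define L where "L = av a * T1 ^ (d - 1)"
  have L1: "L > 1" unfolding L_def using gt1[OF \<rho>T] .
  have step: "av (f z - x0) \<ge> L * av (z - x0)" if t: "av (z - x0) \<ge> T1" for z
  proof -
    have "av (f z - x0) = av a * av (\<Prod>i<d. z - \<gamma> i)" using h\<gamma> mult by metis
    also have "\<dots> = av a * av (z - x0) ^ d" using \<gamma>T t by (subst far) auto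
    also have "\<dots> = av (z - x0) * (av a * av (z - x0) ^ (d - 1))" by (rule split_d)
    finally have e: "av (f z - x0) = av (z - x0) * (av a * av (z - x0) ^ (d - 1))" .
    have "T1 ^ (d - 1) \<le> av (z - x0) ^ (d - 1)" using t T1pos by (intro power_mono) auto
    then have "L \<le> av a * av (z - x0) ^ (d - 1)" unfolding L_def using ava by simp
    then show ?thesis unfolding e using nonneg[of "z - x0"]
      by (metis mult.commute mult_left_mono)
  qed
  have iter_ge: "av ((f ^^ n) z - x0) \<ge> L ^ n * av (z - x0)" if t: "av (z - x0) \<ge> T1" for z n
  proof (induction n)
    case 0 then show ?case by simp
  next
    case (Suc n)
    have "1 \<le> L ^ n" using L1 by simp
    then have "av (z - x0) \<le> L ^ n * av (z - x0)" using nonneg[of "z - x0"]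
      by (metis mult_left_mono mult_1 mult.commute)
    then have "T1 \<le> av ((f ^^ n) z - x0)" using Suc t by linarith
    then have "L * av ((f ^^ n) z - x0) \<le> av ((f ^^ Suc n) z - x0)" using step by simp
    moreover have "L * (L ^ n * av (z - x0)) \<le> L * av ((f ^^ n) z - x0)"
      using Suc L1 by simp
    ultimately show ?case by simp
  qed
  have "av (z - x0) < T1" if zJ: "z \<in> J" for z
  proof (rule ccontr)
    assume "\<not> av (z - x0) < T1"
    then have t: "av (z - x0) \<ge> T1" by simp
    from zJ obtain B where B: "\<forall>n. av ((f ^^ n) z) \<le> B"
      unfolding filled_julia_def bdd_above_def by auto
    obtain n where n: "(B + av x0) / T1 < L ^ n" using real_arch_pow[OF L1] by blast
    have "L ^ n * T1 \<le> L ^ n * av (z - x0)" using t L1 by simp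
    also have "\<dots> \<le> av ((f ^^ n) z - x0)" using iter_ge[OF t] .
    also have "\<dots> \<le> max (av ((f ^^ n) z)) (av x0)" by (rule diff_le)
    also have "\<dots> \<le> B + av x0" using B[rule_format, of n] nonneg[of x0] nonneg[of "(f ^^ n) z"]
      by linarith
    finally have "L ^ n * T1 \<le> B + av x0" .
    then have "L ^ n \<le> (B + av x0) / T1" using T1pos by (simp add: field_simps)
    then show False using n by simp
  qed
  then show ?thesis using T1pos by blast
qed

definition DS where "DS = {av (x - y) | x y. x \<in> J \<and> y \<in> J}"

lemma r_eq: "r = Sup DS" unfolding julia_diam_def DS_def ..

lemma DS_bdd: "bdd_above DS"
proof -
  obtain x0 where x0: "x0 \<in> J" using J_ne by blast
  obtain T where T: "\<forall>z\<in>J. av (z - x0) < T" using J_bdd[OF x0] by blast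
  have "\<forall>v\<in>DS. v \<le> T"
  proof
    fix v assume "v \<in> DS"
    then obtain x y where v: "v = av (x - y)" "x \<in> J" "y \<in> J" unfolding DS_def by blast
    have "av (x - y) \<le> max (av (x - x0)) (av (x0 - y))" by (rule tri)
    moreover have "av (x - x0) < T" "av (y - x0) < T" using v T by auto
    ultimately show "v \<le> T" using v commute[of x0 y] by simp
  qed
  then show ?thesis unfolding bdd_above_def by blast
qed

lemma DS_ne: "DS \<noteq> {}"
  using J_ne unfolding DS_def by blast

lemma dist_le_r: "x \<in> J \<Longrightarrow> y \<in> J \<Longrightarrow> av (x - y) \<le> r"
  unfolding r_eq using DS_bdd by (intro cSup_upper) (auto simp: DS_def)

lemma r_least: "(\<And>x y. x \<in> J \<Longrightarrow> y \<in> J \<Longrightarrow> av (x - y) \<le> s) \<Longrightarrow> r \<le> s"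
  unfolding r_eq using DS_ne by (intro cSup_least) (auto simp: DS_def)

lemma exists_far: "e < r \<Longrightarrow> \<exists>x y. x \<in> J \<and> y \<in> J \<and> av (x - y) > e"
proof (rule ccontr)
  assume "e < r" "\<not> (\<exists>x y. x \<in> J \<and> y \<in> J \<and> av (x - y) > e)"
  then have "r \<le> e" by (intro r_least) force
  then show False using \<open>e < r\<close> by simp
qed

lemma r_nonneg: "r \<ge> 0"
  using J_ne dist_le_r[of x x for x] by (metis nonneg order_trans)

lemma J_disk: "x0 \<in> J \<Longrightarrow> z \<in> J \<Longrightarrow> av (z - x0) \<le> r"
  using dist_le_r by blast

lemma pre_J: "f z = w \<Longrightarrow> w \<in> J \<Longrightarrow> z \<in> J"
  using J_iff by blast

end



context Dyn begin

lemma exists_abs_rho: "\<exists>c. av c = \<rho>"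
proof -
  have "d - 1 \<ge> 1" using d2 by simp
  from exists_prod_root[OF ac this, of "\<lambda>_. 0" "inverse a"]
  obtain z where z: "(\<Prod>i<d - 1. z - (0::'a)) = inverse a" by blast
  then have "z ^ (d - 1) = inverse a" by simp
  then have "av z ^ (d - 1) = inverse (av a)" using power inverse by metis
  also have "\<dots> = \<rho> ^ (d - 1)" using inverse_unique[OF a\<rho>] .
  finally have "av z = \<rho>" using d2 \<rho>_pos by (subst (asm) power_eq_iff_eq_base) auto
  then show ?thesis by blast
qed

lemma outside:
  assumes x0: "x0 \<in> J" and h\<gamma>: "\<forall>z. f z - x0 = a * (\<Prod>i<d. z - \<gamma> i)"
    and t: "av (z - x0) > r"
  shows "av (f z - x0) = av a * av (z - x0) ^ d"
proof -
  have "\<forall>i<d. av (\<gamma> i - x0) < av (z - x0)"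
  proof (intro allI impI)
    fix i assume "i < d"
    then have "(\<Prod>j<d. \<gamma> i - \<gamma> j) = 0" by (intro prod_zero) auto
    then have "f (\<gamma> i) - x0 = 0" using h\<gamma> by simp
    then have "\<gamma> i \<in> J" using x0 pre_J by simp
    then show "av (\<gamma> i - x0) < av (z - x0)" using J_disk[OF x0] t by fastforce
  qed
  then show ?thesis using h\<gamma> mult far by metis
qed

lemma r_ge: "\<rho> \<le> r"
proof (rule ccontr)
  assume "\<not> \<rho> \<le> r"
  then have lt: "r < \<rho>" by simp
  obtain x0 where x0: "x0 \<in> J" using J_ne by blast
  obtain \<gamma> where h\<gamma>: "\<forall>z. f z - x0 = a * (\<Prod>i<d. z - \<gamma> i)" using shift_split by blast
  obtain c where c: "av c = \<rho>" using exists_abs_rho by blast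
  have inv: "av (f w - x0) = \<rho>" if "av (w - x0) = \<rho>" for w
  proof -
    have "av (f w - x0) = av a * \<rho> ^ d" using outside[OF x0 h\<gamma>] that lt by simp
    also have "\<dots> = \<rho>" using split_d[of \<rho>] a\<rho> by (metis mult.right_neutral)
    finally show ?thesis .
  qed
  define z where "z = x0 + c"
  have "av ((f ^^ n) z - x0) = \<rho>" for n
    by (induction n) (simp_all add: z_def c inv)
  then have "z \<in> J" using J_of_bounded[of z x0 \<rho>] by simp
  then have "av (z - x0) \<le> r" using J_disk[OF x0] by simp
  then show False using lt c unfolding z_def by simp
qed

lemma r_pos: "r > 0" using r_ge \<rho>_pos by simp

lemma claim1:
  assumes x0: "x0 \<in> J"
  shows "U0 av \<phi> = cdisk av x0 r"
proof
  have "cdisk av x0 r \<in> {cdisk av c s | c s. s > 0 \<and> J \<subseteq> cdisk av c s}"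
    using r_pos J_disk[OF x0] unfolding cdisk_def by blast
  then show "U0 av \<phi> \<subseteq> cdisk av x0 r" unfolding U0_def by blast
next
  show "cdisk av x0 r \<subseteq> U0 av \<phi>" unfolding U0_def
  proof (rule Inter_greatest)
    fix D assume "D \<in> {cdisk av c s | c s. s > 0 \<and> J \<subseteq> cdisk av c s}"
    then obtain c s where D: "D = cdisk av c s" "J \<subseteq> cdisk av c s" by blast
    have inJ: "av (x - c) \<le> s" if "x \<in> J" for x using D that unfolding cdisk_def by blast
    have "r \<le> s"
    proof (rule r_least)
      fix x y assume "x \<in> J" "y \<in> J"
      then have "av (x - c) \<le> s" "av (c - y) \<le> s" using inJ commute[of c y] by auto
      then show "av (x - y) \<le> s" using tri[of x y c] by simp
    qed
    show "cdisk av x0 r \<subseteq> D"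
    proof
      fix w assume "w \<in> cdisk av x0 r"
      then have "av (w - x0) \<le> r" unfolding cdisk_def by simp
      moreover have "av (x0 - c) \<le> s" using inJ x0 by simp
      ultimately show "w \<in> D" unfolding D cdisk_def using tri[of w c x0] \<open>r \<le> s\<close> by simp
    qed
  qed
qed

end



context Dyn begin

definition e0 where "e0 = (r / av a) powr (1 / real d)"

lemma e0_props:
  assumes gt: "r > \<rho>"
  shows "e0 > 0" "av a * e0 ^ d = r" "e0 < r"
proof -
  have q: "r / av a > 0" using r_pos ava by simp
  then show e0p: "e0 > 0" unfolding e0_def using r_pos a_nz by simp
  have h1: "e0 ^ d = e0 powr real d" by (rule powr_realpow[OF e0p, symmetric])
  have h2: "e0 powr real d = (r / av a) powr (1 / real d * real d)" unfolding e0_def powr_powr ..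
  have h3: "1 / real d * real d = 1" using d2 by simp
  have h4: "(r / av a) powr (1 / real d * real d) = r / av a" unfolding h3 using q by (intro powr_one) simp
  have ed: "e0 ^ d = r / av a" using h1 h2 h4 by simp
  have ne: "av a \<noteq> 0" using ava by linarith
  show "av a * e0 ^ d = r" unfolding ed times_divide_eq_right using ne by (rule nonzero_mult_div_cancel_left)
  have "av a * r ^ d = r * (av a * r ^ (d - 1))" by (rule split_d)
  also have "\<dots> > r * 1" using gt1[OF gt] r_pos by (intro mult_strict_left_mono) auto
  finally have "r * 1 < av a * r ^ d" .
  then have "r < r ^ d * av a" by (simp only: mult_1_right mult.commute)
  then have "r / av a < r ^ d" using pos_divide_less_eq[OF ava] by blast
  then have "e0 ^ d < r ^ d" unfolding ed .
  then show "e0 < r" using power_less_imp_less_base r_pos by (meson less_imp_le)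
qed

lemma above_e0:
  assumes gt: "r > \<rho>" and t: "t > e0"
  shows "av a * t ^ d > r"
proof -
  have "e0 ^ d < t ^ d" using t e0_props(1)[OF gt] d2 by (intro power_strict_mono) auto
  then have "av a * e0 ^ d < av a * t ^ d" using ava by simp
  then show ?thesis using e0_props(2)[OF gt] by simp
qed

lemma claim3a:
  assumes x0: "x0 \<in> J" and eq: "r = \<rho>"
  shows "J = cdisk av x0 r"
proof
  show "J \<subseteq> cdisk av x0 r" using J_disk[OF x0] unfolding cdisk_def by blast
next
  show "cdisk av x0 r \<subseteq> J"
  proof
    fix z assume "z \<in> cdisk av x0 r"
    then have z: "av (z - x0) \<le> \<rho>" using eq unfolding cdisk_def by simp
    obtain \<gamma> where h\<gamma>: "\<forall>z. f z - x0 = a * (\<Prod>i<d. z - \<gamma> i)" using shift_split by blast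
    have \<gamma>J: "\<gamma> i \<in> J" if "i < d" for i
    proof -
      have "(\<Prod>j<d. \<gamma> i - \<gamma> j) = 0" using that by (intro prod_zero) auto
      then have "f (\<gamma> i) - x0 = 0" using h\<gamma> by simp
      then show ?thesis using x0 pre_J by simp
    qed
    have inv: "av (f w - x0) \<le> \<rho>" if w: "av (w - x0) \<le> \<rho>" for w
    proof -
      have le: "av (w - \<gamma> i) \<le> \<rho>" if "i < d" for i
      proof -
        have "av (x0 - \<gamma> i) \<le> \<rho>" using J_disk[OF x0 \<gamma>J[OF that]] eq commute by metis
        then show ?thesis using tri[of w "\<gamma> i" x0] w by simp
      qed
      have "av (f w - x0) = av a * (\<Prod>i<d. av (w - \<gamma> i))" using h\<gamma> mult prod by metis
      also have "\<dots> \<le> av a * (\<Prod>i<d. \<rho>)"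
        using le ava by (intro mult_left_mono prod_mono) auto
      also have "\<dots> = av a * \<rho> ^ d" by simp
      also have "\<dots> = \<rho>" using split_d[of \<rho>] a\<rho> by (metis mult.right_neutral)
      finally show ?thesis .
    qed
    have "av ((f ^^ n) z - x0) \<le> \<rho>" for n
      by (induction n) (simp_all add: z inv)
    then show "z \<in> J" using J_of_bounded by blast
  qed
qed

lemma claim3b:
  assumes x0: "x0 \<in> J" and eq: "J = cdisk av x0 r"
  shows "r = \<rho>"
proof (rule ccontr)
  assume "r \<noteq> \<rho>"
  then have gt: "r > \<rho>" using r_ge by simp
  obtain \<gamma> where h\<gamma>: "\<forall>z. f z - x0 = a * (\<Prod>i<d. z - \<gamma> i)" using shift_split by blast
  obtain y y' where yy: "y \<in> J" "y' \<in> J" "av (y - y') > e0"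
    using exists_far[OF e0_props(3)[OF gt]] by blast
  have tr: "av (y - y') \<le> r" using dist_le_r yy by simp
  have "d \<ge> 1" using d2 by simp
  from exists_prod_root[OF ac this, of \<gamma> "(y - y') ^ d"]
  obtain z where z: "(\<Prod>i<d. z - \<gamma> i) = (y - y') ^ d" by blast
  have zr: "av (z - x0) \<le> r"
  proof (rule ccontr)
    assume "\<not> av (z - x0) \<le> r"
    then have zt: "av (z - x0) > r" by simp
    have "av (f z - x0) = av a * av (z - x0) ^ d" using outside[OF x0 h\<gamma> zt] .
    moreover have "av (f z - x0) = av a * av (y - y') ^ d" using h\<gamma>[rule_format, of z] z mult power by simp
    moreover have "av (y - y') ^ d < av (z - x0) ^ d"
      using zt tr d2 by (intro power_strict_mono) auto
    ultimately show False using ava by simp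
  qed
  then have "z \<in> J" using eq unfolding cdisk_def by simp
  then have "f z \<in> J" using J_iff by simp
  then have "av (f z - x0) \<le> r" using J_disk[OF x0] by simp
  moreover have "av (f z - x0) = av a * av (y - y') ^ d" using h\<gamma>[rule_format, of z] z mult power by simp
  moreover have "av a * av (y - y') ^ d > r" using above_e0[OF gt yy(3)] .
  ultimately show False by simp
qed

end



context NA begin
lemma ultra:
  assumes "av (u - v) > s" "av (u - p) \<le> s" "av (v - q) \<le> s"
  shows "av (p - q) = av (u - v)"
proof -
  have "av (p - u) < av (u - v)" using assms commute[of u p] by simp
  then have e1: "av ((u - v) + (p - u)) = av (u - v)" by (rule strict)
  have pv: "av (p - v) = av (u - v)" using e1 by (simp add: algebra_simps)
  have "av (v - q) < av (p - v)" using assms pv by simp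
  then have "av ((p - v) + (v - q)) = av (p - v)" by (rule strict)
  then show ?thesis using pv by simp
qed
end

context Dyn begin

lemma claim4:
  assumes gt: "r > \<rho>" and \<alpha>: "\<alpha> \<in> U0 av \<phi>"
    and h\<beta>: "\<forall>z. f z - \<alpha> = a * (\<Prod>i<d. z - \<beta> i)" and y: "y \<in> J"
  shows "\<exists>i<d. av (y - \<beta> i) \<le> \<rho>"
proof (rule ccontr)
  assume "\<not> ?thesis"
  then have faraway: "\<forall>i<d. av (y - \<beta> i) > \<rho>" by auto
  obtain x0 where x0: "x0 \<in> J" using J_ne by blast
  have \<alpha>x: "av (\<alpha> - x0) \<le> r" using \<alpha> claim1[OF x0] unfolding cdisk_def by auto
  obtain \<gamma> where h\<gamma>: "\<forall>z. f z - x0 = a * (\<Prod>i<d. z - \<gamma> i)" using shift_split by blast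
  have Jr: "av (w - \<alpha>) \<le> r" if "w \<in> J" for w
  proof -
    have "av (w - x0) \<le> r" using J_disk[OF x0 that] .
    moreover have "av (x0 - \<alpha>) \<le> r" using \<alpha>x commute by metis
    ultimately show ?thesis using tri[of w \<alpha> x0] by simp
  qed
  have \<beta>r: "av (\<beta> i - x0) \<le> r" if i: "i < d" for i
  proof (rule ccontr)
    assume "\<not> av (\<beta> i - x0) \<le> r"
    then have t: "av (\<beta> i - x0) > r" by simp
    have pz: "(\<Prod>j<d. \<beta> i - \<beta> j) = 0" using i by (intro prod_zero) auto
    have "f (\<beta> i) - \<alpha> = a * 0" using h\<beta>[rule_format, of "\<beta> i"] unfolding pz .
    then have fb: "f (\<beta> i) = \<alpha>" by simp
    have "av (f (\<beta> i) - x0) = av a * av (\<beta> i - x0) ^ d" using outside[OF x0 h\<gamma> t] .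
    also have "\<dots> = av (\<beta> i - x0) * (av a * av (\<beta> i - x0) ^ (d - 1))" by (rule split_d)
    also have "\<dots> > av (\<beta> i - x0) * 1"
      using gt1[of "av (\<beta> i - x0)"] t gt r_pos by (intro mult_strict_left_mono) auto
    finally show False using fb \<alpha>x t by simp
  qed
  have yr: "av (y - \<beta> i) \<le> r" if i: "i < d" for i
  proof -
    have "av (y - x0) \<le> r" using J_disk[OF x0 y] .
    moreover have "av (x0 - \<beta> i) \<le> r" using \<beta>r[OF i] commute by metis
    ultimately show ?thesis using tri[of y "\<beta> i" x0] by simp
  qed
  have fy: "av (f y - \<alpha>) \<le> r" using Jr y J_iff by simp
  have fyeq: "av (f y - \<alpha>) = av a * (\<Prod>i<d. av (y - \<beta> i))"
    using h\<beta>[rule_format, of y] mult prod by metis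
  show False
  proof (cases "\<exists>j<d. av (y - \<beta> j) = r")
    case True
    then obtain j where j: "j < d" "av (y - \<beta> j) = r" by blast
    define A where "A = {..<d} - {j}"
    have P: "(\<Prod>i<d. av (y - \<beta> i)) = av (y - \<beta> j) * (\<Prod>i\<in>A. av (y - \<beta> i))"
      unfolding A_def using j by (intro prod.remove) auto
    define i0 where "i0 = (if j = 0 then 1 else (0::nat))"
    have i0A: "i0 \<in> A" unfolding A_def i0_def using d2 by auto
    have cardA: "card A = d - 1" unfolding A_def using j by simp
    have "(\<Prod>i\<in>A. \<rho>) < (\<Prod>i\<in>A. av (y - \<beta> i))"
    proof (rule prod_mono_strict[OF i0A])
      show "\<rho> < av (y - \<beta> i0)" using faraway i0A unfolding A_def by auto
      show "finite A" unfolding A_def by simp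
      show "0 \<le> \<rho> \<and> \<rho> \<le> av (y - \<beta> i)" if "i \<in> A" for i
        using faraway that \<rho>_pos unfolding A_def by (auto simp: less_imp_le)
      show "0 < av (y - \<beta> i)" if "i \<in> A" for i
        using faraway that \<rho>_pos unfolding A_def by (meson DiffD1 lessThan_iff order.strict_trans)
    qed
    then have "\<rho> ^ (d - 1) < (\<Prod>i\<in>A. av (y - \<beta> i))" using cardA by simp
    then have c1: "av a * r * \<rho> ^ (d - 1) < av a * r * (\<Prod>i\<in>A. av (y - \<beta> i))"
      using ava r_pos by simp
    have "av a * r * \<rho> ^ (d - 1) = r * (av a * \<rho> ^ (d - 1))" by (simp only: ac_simps)
    then have c2: "av a * r * \<rho> ^ (d - 1) = r" unfolding a\<rho> by simp
    have "av (f y - \<alpha>) = av a * r * (\<Prod>i\<in>A. av (y - \<beta> i))"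
      using fyeq P j by (simp add: algebra_simps)
    then show False using fy c1 c2 by linarith
  next
    case False
    then have lt: "\<forall>i<d. av (y - \<beta> i) < r" using yr by (meson le_less)
    define M where "M = Max ((\<lambda>i. av (y - \<beta> i)) ` {..<d})"
    have fin: "finite ((\<lambda>i. av (y - \<beta> i)) ` {..<d})" by simp
    have "0 \<in> {..<d}" using d2 by simp
    then have ne: "(\<lambda>i. av (y - \<beta> i)) ` {..<d} \<noteq> {}" by blast
    have "M \<in> (\<lambda>i. av (y - \<beta> i)) ` {..<d}" unfolding M_def using fin ne by (rule Max_in)
    then have Mr: "M < r" using lt by auto
    have Mge: "av (y - \<beta> i) \<le> M" if "i < d" for i
      unfolding M_def using fin that by (intro Max_ge) auto
    define s where "s = max M e0"
    have sr: "s < r" unfolding s_def using Mr e0_props(3)[OF gt] by simp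
    have zs: "av (z - y) \<le> s" if z: "z \<in> J" for z
    proof (rule ccontr)
      assume "\<not> av (z - y) \<le> s"
      then have zt: "av (z - y) > s" by simp
      have "\<forall>i<d. av (\<beta> i - y) < av (z - y)"
        using Mge zt commute unfolding s_def by (metis max.strict_boundedE le_less_trans)
      then have "av (\<Prod>i<d. z - \<beta> i) = av (z - y) ^ d" by (rule far)
      then have "av (f z - \<alpha>) = av a * av (z - y) ^ d" using h\<beta>[rule_format, of z] mult by metis
      moreover have "av a * av (z - y) ^ d > r" using above_e0[OF gt] zt unfolding s_def by simp
      moreover have "av (f z - \<alpha>) \<le> r" using Jr z J_iff by simp
      ultimately show False by simp
    qed
    obtain x x' where xx: "x \<in> J" "x' \<in> J" "av (x - x') > s" using exists_far[OF sr] by blast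
    have "av (x - x') \<le> max (av (x - y)) (av (y - x'))" by (rule tri)
    moreover have "av (y - x') \<le> s" using zs[OF xx(2)] commute by metis
    ultimately show False using zs[OF xx(1)] xx(3) by simp
  qed
qed

lemma claim2: "\<exists>x. av x = r"
proof (cases "r = \<rho>")
  case True then show ?thesis using exists_abs_rho by simp
next
  case False
  then have gt: "r > \<rho>" using r_ge by simp
  obtain x0 where x0: "x0 \<in> J" using J_ne by blast
  obtain \<beta> where h\<beta>: "\<forall>z. f z - x0 = a * (\<Prod>i<d. z - \<beta> i)" using shift_split by blast
  have "x0 \<in> U0 av \<phi>" using claim1[OF x0] r_pos unfolding cdisk_def by simp
  note cover = claim4[OF gt this h\<beta>]
  define F where "F = (\<lambda>p. av (\<beta> (fst p) - \<beta> (snd p))) ` ({..<d} \<times> {..<d})"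
  show ?thesis
  proof (rule ccontr)
    assume nx: "\<not> ?thesis"
    then have rF: "r \<notin> F" unfolding F_def by auto
    define S where "S = insert \<rho> {v\<in>F. v < r}"
    have finS: "finite S" unfolding S_def F_def by simp
    define m where "m = Max S"
    have "m \<in> S" unfolding m_def using finS by (intro Max_in) (auto simp: S_def)
    then have mr: "m < r" using gt unfolding S_def by auto
    have \<rho>m: "\<rho> \<le> m" unfolding m_def using finS by (intro Max_ge) (auto simp: S_def)
    obtain x x' where xx: "x \<in> J" "x' \<in> J" "av (x - x') > m" using exists_far[OF mr] by blast
    obtain i where i: "i < d" "av (x - \<beta> i) \<le> \<rho>" using cover[OF xx(1)] by blast
    obtain j where j: "j < d" "av (x' - \<beta> j) \<le> \<rho>" using cover[OF xx(2)] by blast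
    have "av (\<beta> i - \<beta> j) = av (x - x')" using xx(3) \<rho>m i j by (intro ultra) auto
    then have vF: "av (x - x') \<in> F" unfolding F_def using i j by force
    then have "av (x - x') \<noteq> r" using rF by auto
    then have "av (x - x') < r" using dist_le_r[OF xx(1,2)] by simp
    then have "av (x - x') \<in> S" using vF unfolding S_def by simp
    then have "av (x - x') \<le> m" unfolding m_def using finS by (intro Max_ge)
    then show False using xx(3) by simp
  qed
qed

end


theorem lemma3p4:
  fixes K :: "'a::field set" and av :: "'a \<Rightarrow> real" and \<phi> :: "'a poly" and d :: nat
  assumes Cv: "is_Cv K av"
    and coeffs: "\<forall>i. coeff \<phi> i \<in> K"
    and deg: "degree \<phi> = d" and d2: "d \<ge> 2"
  shows "(\<forall>x\<in>filled_julia av \<phi>. U0 av \<phi> = cdisk av x (julia_diam av \<phi>))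
    \<and> (\<exists>x. av x = julia_diam av \<phi>)
    \<and> julia_diam av \<phi> \<ge> av (lead_coeff \<phi>) powr (-1 / (real d - 1))
    \<and> (julia_diam av \<phi> = av (lead_coeff \<phi>) powr (-1 / (real d - 1))
         \<longleftrightarrow> filled_julia av \<phi> = U0 av \<phi>)
    \<and> (julia_diam av \<phi> > av (lead_coeff \<phi>) powr (-1 / (real d - 1)) \<longrightarrow>
        (\<forall>\<alpha> \<in> U0 av \<phi>. \<forall>\<beta> :: nat \<Rightarrow> 'a.
           \<phi> - [:\<alpha>:] = smult (lead_coeff \<phi>) (\<Prod>i<d. [:- \<beta> i, 1:]) \<longrightarrow>
           filled_julia av \<phi> \<subseteq>
             (\<Union>i<d. cdisk av (\<beta> i) (av (lead_coeff \<phi>) powr (-1 / (real d - 1))))))"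
proof -
  from Cv have na: "nonarch_abs av" and ac: "alg_closed_field TYPE('a)"
    unfolding is_Cv_def by auto
  interpret Dyn av \<phi> d using na ac deg d2 by unfold_locales auto
  have \<rho>eq: "av (lead_coeff \<phi>) powr (-1 / (real d - 1)) = \<rho>" unfolding \<rho>_def a_def ..
  obtain x0 where x0: "x0 \<in> J" using J_ne by blast
  have P1: "\<forall>x\<in>J. U0 av \<phi> = cdisk av x r" using claim1 by blast
  have P3: "r = \<rho> \<longleftrightarrow> J = U0 av \<phi>"
  proof
    assume "r = \<rho>" then show "J = U0 av \<phi>" using claim3a[OF x0] claim1[OF x0] by simp
  next
    assume "J = U0 av \<phi>" then show "r = \<rho>" using claim3b[OF x0] claim1[OF x0] by simp
  qed
  have P4: "r > \<rho> \<longrightarrow> (\<forall>\<alpha> \<in> U0 av \<phi>. \<forall>\<beta> :: nat \<Rightarrow> 'a.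
           \<phi> - [:\<alpha>:] = smult (lead_coeff \<phi>) (\<Prod>i<d. [:- \<beta> i, 1:]) \<longrightarrow>
           J \<subseteq> (\<Union>i<d. cdisk av (\<beta> i) \<rho>))"
  proof (intro impI ballI allI subsetI)
    fix \<alpha> \<beta> y
    assume gt: "r > \<rho>" and \<alpha>: "\<alpha> \<in> U0 av \<phi>"
      and eq: "\<phi> - [:\<alpha>:] = smult (lead_coeff \<phi>) (\<Prod>i<d. [:- \<beta> i, 1:])" and y: "y \<in> J"
    have "\<forall>z. f z - \<alpha> = a * (\<Prod>i<d. z - \<beta> i)"
    proof
      fix z
      have "poly (\<phi> - [:\<alpha>:]) z = lead_coeff \<phi> * (\<Prod>i<d. z - \<beta> i)"
        by (rule split_poly_eval[OF eq])
      then show "f z - \<alpha> = a * (\<Prod>i<d. z - \<beta> i)" unfolding a_def by simp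
    qed
    from claim4[OF gt \<alpha> this y] obtain i where "i < d" "av (y - \<beta> i) \<le> \<rho>" by blast
    then show "y \<in> (\<Union>i<d. cdisk av (\<beta> i) \<rho>)" unfolding cdisk_def by blast
  qed
  show ?thesis unfolding \<rho>eq using P1 claim2 r_ge P3 P4 by blast
qed

end
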